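(* For $k\ge4$ and $d\in[(2^{k-1}-2)k\log2,\;2^{k-1}k\log2]$ if $k\ge5$, resp. $d\in[16.7,\;32\log2]$ if $k=4$, the equation $\Psi_d(x)=x$ has a unique solution in $[\frac12-\frac1{2^k},\frac12]$.
   Context: $\hat\Psi(x)=\frac{1-2x^{k-1}}{1-x^{k-1}}$, $\dot\Psi(v)=\frac{1-v^{d-1}}{2-v^{d-1}}$, $\Psi_d=\dot\Psi\circ\hat\Psi$ ($d$ real). *)

theory Defs
  imports Complex_Main
begin

definition psi_hat :: "nat \<Rightarrow> real \<Rightarrow> real" where
  "psi_hat k x = (1 - 2 * x ^ (k - 1)) / (1 - x ^ (k - 1))"

text \<open>d is real, so v to the power d-1 is the real power (powr); v is positive in the relevant range.\<close>
definition psi_dot :: "real \<Rightarrow> real \<Rightarrow> real" where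
  "psi_dot d v = (1 - v powr (d - 1)) / (2 - v powr (d - 1))"

definition Psi :: "nat \<Rightarrow> real \<Rightarrow> real \<Rightarrow> real" where
  "Psi k d = psi_dot d \<circ> psi_hat k"

end

theory Submission imports Defs "HOL-Analysis.Harmonic_Numbers" begin

definition phi :: "real \<Rightarrow> real" where "phi t = ln ((1-t)/(1-2*t))"

lemma phi_deriv:
  assumes t: "t < 1/2"
  shows "(phi has_real_derivative 1/((1-t)*(1-2*t))) (at t)"
proof -
  have "((\<lambda>t. ln ((1-t)/(1-2*t))) has_real_derivative 1/((1-t)*(1-2*t))) (at t)"
    using t by (auto intro!: derivative_eq_intros)
  then show ?thesis unfolding phi_def[abs_def] .
qed

lemma phi_lower:
  assumes "0 < y" "y < 1/2"
  shows "y/(1-y) \<le> phi y"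
proof -
  have z: "0 < (1-2*y)/(1-y)" using assms by simp
  have "ln ((1-2*y)/(1-y)) \<le> (1-2*y)/(1-y) - 1" using ln_le_minus_one[OF z] .
  moreover have "ln ((1-2*y)/(1-y)) = - phi y" unfolding phi_def
    using assms by (simp add: ln_div)
  moreover have "(1-2*y)/(1-y) - 1 = - (y/(1-y))" using assms by (simp add: field_simps)
  ultimately show ?thesis by linarith
qed

lemma phi_pos: "0 < y \<Longrightarrow> y < 1/2 \<Longrightarrow> 0 < phi y"
proof -
  assume a: "0 < y" "y < 1/2"
  then have "0 < y/(1-y)" by simp
  then show ?thesis using phi_lower[OF a] by linarith
qed

lemma Psi_iff:
  assumes x: "0 < x" "x < 1/2" and d: "d > 1" and y: "0 < x^(k-1)" "x^(k-1) < 1/2"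
  shows "(x \<le> Psi k d x \<longleftrightarrow> phi x \<le> (d-1) * phi (x^(k-1)))
       \<and> (Psi k d x = x \<longleftrightarrow> (d-1) * phi (x^(k-1)) = phi x)"
proof -
  define y where "y = x^(k-1)"
  define v where "v = (1-2*y)/(1-y)"
  define w where "w = v powr (d-1)"
  define hx where "hx = (1-2*x)/(1-x)"
  have y': "0 < y" "y < 1/2" using y y_def by auto
  have v: "0 < v" "v < 1" using y' unfolding v_def by (auto simp: field_simps)
  have lnv: "ln v = - phi y" unfolding phi_def v_def using y' by (simp add: ln_div)
  have lnw: "ln w = (d-1) * ln v" unfolding w_def using v by (simp add: ln_powr)
  have w0: "0 < w" unfolding w_def using v by simp
  have "ln v < 0" using v by simp
  then have "ln w < 0" using lnw d by (simp add: mult_pos_neg)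
  then have w1: "w < 1" using w0 by simp
  have hx: "0 < hx" unfolding hx_def using x by simp
  have lnhx: "ln hx = - phi x" unfolding phi_def hx_def using x by (simp add: ln_div)
  have P: "Psi k d x = (1-w)/(2-w)"
    unfolding Psi_def psi_dot_def psi_hat_def comp_def w_def v_def y_def by simp
  have e1: "x \<le> (1-w)/(2-w) \<longleftrightarrow> w \<le> hx"
    using w1 x unfolding hx_def by (simp add: field_simps)
  have e2: "(1-w)/(2-w) = x \<longleftrightarrow> w = hx"
    using w1 x unfolding hx_def by (auto simp: field_simps)
  have e3: "w \<le> hx \<longleftrightarrow> ln w \<le> ln hx" using w0 hx by simp
  have e4: "w = hx \<longleftrightarrow> ln w = ln hx" using w0 hx by simp
  show ?thesis unfolding P e1 e2 e3 e4 lnw lnhx lnv y_def[symmetric] by auto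
qed

lemma Psi_half:
  assumes "k \<ge> 4" "d > 1"
  shows "Psi k d (1/2) < 1/2"
proof -
  define y where "y = (1/2::real)^(k-1)"
  have "y \<le> (1/2)^2" unfolding y_def using assms by (intro power_decreasing) auto
  then have y1: "y \<le> 1/4" by (simp add: eval_nat_numeral)
  moreover have y0: "0 < y" unfolding y_def by simp
  ultimately have v: "0 < (1-2*y)/(1-y)" "(1-2*y)/(1-y) < 1" by (auto simp: field_simps)
  define w where "w = ((1-2*y)/(1-y)) powr (d-1)"
  have w0: "0 < w" unfolding w_def using v y0 y1 by simp
  have w1: "w < 1" unfolding w_def using powr_less_mono2[of "d-1" "(1-2*y)/(1-y)" 1] v assms by simp
  have P: "Psi k d (1/2) = (1-w)/(2-w)"
    unfolding Psi_def psi_dot_def psi_hat_def comp_def w_def y_def by simp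
  show ?thesis unfolding P using w0 w1 by (simp add: field_simps)
qed
lemma conv_bound:
  fixes s0 s :: real
  assumes s0: "0 < s0" "s0 < 1" and s: "0 < s" "s \<le> s0" and one: "1 \<le> ln ((1+s0)/(2* s0))"
  shows "((1+s)/2) * s * ln ((1+s)/(2* s)) \<le> ((1+s0)/2) * s0 * ln ((1+s0)/(2* s0))"
proof -
  define c0 where "c0 = (1+s0)/2"
  have c0: "0 < c0" unfolding c0_def using s0 by simp
  have lpos: "0 \<le> ln ((1+s)/(2* s))" using s s0 by simp
  have "ln ((1+s)/(2* s)) \<le> ln (c0/s)" unfolding c0_def using s s0 by (simp add: divide_simps)
  then have st1: "((1+s)/2) * s * ln ((1+s)/(2* s)) \<le> c0 * s * ln (c0/s)"
    using lpos s unfolding c0_def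
    by (intro mult_mono) (auto simp: mult_nonneg_nonneg)
  have split: "ln (c0/s) = ln (c0/s0) + ln (s0/s)" using c0 s s0
    by (simp add: ln_div)
  have "ln (s0/s) \<le> s0/s - 1" using ln_le_minus_one[of "s0/s"] s s0 by simp
  then have "s * ln (s0/s) \<le> s0 - s" using s by (simp add: field_simps mult_le_cancel_left_pos)
  then have "s * ln (c0/s) \<le> s * ln (c0/s0) + (s0 - s)" unfolding split by (simp add: distrib_left)
  also have "\<dots> \<le> s0 * ln (c0/s0)"
  proof -
    have "1 \<le> ln (c0/s0)" using one unfolding c0_def by (simp add: field_simps)
    then have "(s0 - s) * 1 \<le> (s0 - s) * ln (c0/s0)" using s by (intro mult_left_mono) auto
    then show ?thesis by (simp add: algebra_simps)
  qed
  finally have "c0 * (s * ln (c0/s)) \<le> c0 * (s0 * ln (c0/s0))" using c0 by simp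
  with st1 show ?thesis unfolding c0_def by (simp add: mult.assoc field_simps)
qed

lemma pow_k5: "k \<ge> 5 \<Longrightarrow> (real k - 1)^2 \<le> 2^(k-1)"
proof (induction k rule: dec_induct)
  case base then show ?case by simp
next
  case (step n)
  have h: "real n * 4 \<le> real n * real n" using step by (intro mult_left_mono) auto
  have eq: "2*(real n - 1)^2 = 2*(real n*real n) - 4*real n + 2" by (simp add: power2_eq_square algebra_simps)
  have eq2: "(real (Suc n) - 1)^2 = real n * real n" by (simp add: power2_eq_square)
  have "(real (Suc n) - 1)^2 \<le> 2 * (real n - 1)^2" using h eq eq2 by linarith
  also have "\<dots> \<le> 2 * 2^(n-1)" using step by simp
  also have "\<dots> = 2^(Suc n - 1)" using step by (cases n) auto
  finally show ?case .
qed

lemma pow_k6: "k \<ge> 6 \<Longrightarrow> real k * (real k + 1) + 22 \<le> 2^k"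
proof (induction k rule: dec_induct)
  case base then show ?case by simp
next
  case (step n)
  have "real n * 1 \<le> real n * real n" using step by (intro mult_left_mono) auto
  then have "real (Suc n) * (real (Suc n) + 1) + 22 \<le> 2 * (real n * (real n + 1) + 22)"
    by (simp add: power2_eq_square algebra_simps)
  also have "\<dots> \<le> 2 * 2^n" using step by simp
  finally show ?case by simp
qed

lemma s0_facts:
  assumes k: "k \<ge> 4" and s0: "s0 = (1/2::real)^(k-1)"
  shows "0 < s0" "s0 \<le> 1/8" "1/2 - 1/2^k = (1-s0)/2" "2^(k-1) * s0 = 1"
    "ln ((1+s0)/(2 * s0)) = (real k - 2) * ln 2 + ln (1+s0)"
    "ln ((1+s0)/(2 * s0)) \<le> (real k - 2) * ln 2 + s0"
    "phi ((1-s0)/2) = ln ((1+s0)/(2 * s0))"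
proof -
  show p: "0 < s0" using s0 by simp
  have "s0 \<le> (1/2)^3" unfolding s0 using k by (intro power_decreasing) auto
  then show "s0 \<le> 1/8" by (simp add: eval_nat_numeral)
  obtain m where m: "k = Suc (Suc m)" using k by (metis add_2_eq_Suc le_Suc_ex numeral_Bit0 numeral_One le_add1 le_trans)
  show "1/2 - 1/2^k = (1-s0)/2" unfolding s0 m by (simp add: field_simps)
  show "2^(k-1) * s0 = 1" unfolding s0 by (simp add: power_one_over[symmetric] power_mult_distrib[symmetric])
  have e: "(1+s0)/(2 * s0) = (1+s0) * 2^m" unfolding s0 m by (simp add: field_simps)
  show l: "ln ((1+s0)/(2 * s0)) = (real k - 2) * ln 2 + ln (1+s0)"
    unfolding e using p by (simp add: ln_mult ln_realpow m)
  have "ln (1+s0) \<le> s0" using p by (intro ln_add_one_self_le_self) simp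
  then show "ln ((1+s0)/(2 * s0)) \<le> (real k - 2) * ln 2 + s0" unfolding l by simp
  show "phi ((1-s0)/2) = ln ((1+s0)/(2 * s0))" unfolding phi_def
    by (rule arg_cong[where f=ln]) (simp add: field_simps)
qed

lemma uniq_num:
  assumes k: "k \<ge> 4" and s0: "s0 = (1/2::real)^(k-1)"
  shows "(real k - 1) * ((1+s0)/2 * s0 * ln ((1+s0)/(2 * s0))) < (1-s0)/2 * (1 - 2 * s0)"
proof -
  note F = s0_facts[OF k s0]
  define l where "l = ln ((1+s0)/(2 * s0))"
  have L: "ln (2::real) \<le> 25/36" by (rule ln2_le_25_over_36)
  have l: "l \<le> (real k - 2) * ln 2 + s0" using F(6) l_def by simp
  show ?thesis
  proof (cases "k = 4")
    case True
    then have "s0 = 1/8" using s0 by (simp add: eval_nat_numeral)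
    then have s: "s0 = 1/8" .
    have "l \<le> 2 * ln 2 + 1/8" using l s True by simp
    then have "(real k - 1) * ((1+s0)/2 * s0 * l) < (1-s0)/2 * (1 - 2 * s0)"
      using L by (simp add: s True)
    then show ?thesis unfolding l_def .
  next
    case False
    then have k5: "k \<ge> 5" using k by simp
    have "s0 \<le> (1/2)^4" unfolding s0 using k5 by (intro power_decreasing) auto
    then have s16: "s0 \<le> 1/16" by (simp add: eval_nat_numeral)
    have "(real k - 2) * ln 2 \<le> (real k - 2) * (25/36)" using L k5 by (intro mult_left_mono) auto
    then have l7: "l \<le> 7/10 * (real k - 1)" using l s16 k5 by simp
    have lpos: "0 \<le> l" unfolding l_def using F(1,2) by simp
    have kk: "(real k - 1)^2 * s0 \<le> 1" using pow_k5[OF k5] F(4) F(1)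
      by (metis mult_right_mono less_imp_le)
    have "(real k - 1) * ((1+s0)/2 * s0 * l) \<le> (real k - 1) * ((17/16)/2 * s0 * (7/10 * (real k - 1)))"
      using k5 F(1) s16 l7 lpos by (intro mult_left_mono mult_mono) auto
    also have "\<dots> = 119/320 * ((real k - 1)^2 * s0)" by (simp add: power2_eq_square)
    also have "\<dots> \<le> 119/320" using kk by (simp add: mult.commute[of s0])
    also have "\<dots> < (1-s0)/2 * (1 - 2 * s0)" using s16 F(1)
    proof -
      have "(15/16) * (7/8) \<le> (1-s0) * (1 - 2 * s0)" using s16 by (intro mult_mono) auto
      then show ?thesis by simp
    qed
    finally show ?thesis unfolding l_def .
  qed
qed

lemma sq_step: "0 \<le> (b::real) \<Longrightarrow> b \<le> x \<Longrightarrow> c \<le> b * b \<Longrightarrow> c \<le> x * x"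
  by (meson mult_mono order_trans order.trans[of _ b x] dual_order.trans le_less_trans linorder_not_le mult_mono' zero_le_mult_iff)

lemma chain157:
  fixes r :: real assumes h0: "550293/500000 \<le> r"
  shows "(9/2)^10 \<le> r^157"
proof -
  have h1: "1211289/1000000 \<le> r^2"
    using sq_step[OF _ h0, of "1211289/1000000"] by (simp add: power2_eq_square)
  have h2: "1467221/1000000 \<le> r^4"
    using sq_step[OF _ h1, of "1467221/1000000"] by (simp flip: power_add)
  have h3: "2152737/1000000 \<le> r^8"
    using sq_step[OF _ h2, of "2152737/1000000"] by (simp flip: power_add)
  have h4: "1158569/250000 \<le> r^16"
    using sq_step[OF _ h3, of "1158569/250000"] by (simp flip: power_add)
  have h5: "10738257/500000 \<le> r^32"
    using sq_step[OF _ h4, of "10738257/500000"] by (simp flip: power_add)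
  have h6: "461240653/1000000 \<le> r^64"
    using sq_step[OF _ h5, of "461240653/1000000"] by (simp flip: power_add)
  have h7: "212742939979/1000000 \<le> r^128"
    using sq_step[OF _ h6, of "212742939979/1000000"] by (simp flip: power_add)
  have "(212742939979/1000000) * (1158569/250000) * (2152737/1000000) * (1467221/1000000) * (550293/500000)
      \<le> r^128 * r^16 * r^8 * r^4 * r^1"
    using h0 h2 h3 h4 h7 by (intro mult_mono) auto
  also have "r^128 * r^16 * r^8 * r^4 * r^1 = r^157" by (simp only: power_add[symmetric]) simp
  finally have *: "(212742939979/1000000) * (1158569/250000) * (2152737/1000000) * (1467221/1000000) * (550293/500000) \<le> r^157" .
  have "(9/2::real)^10 = 3486784401/1024" by (simp add: eval_nat_numeral)
  with * show ?thesis by simp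
qed

lemma big4: "10 * ln (9/2::real) \<le> 157 * ln (3753/3410)"
proof -
  have "(9/2::real)^10 \<le> (3753/3410)^157" by (rule chain157) simp
  then have "ln ((9/2::real)^10) \<le> ln ((3753/3410)^157)"
    by (subst ln_le_cancel_iff) (rule zero_less_power; simp)+
  then show ?thesis by (simp only: ln_realpow of_nat_numeral)
qed

lemma exist_num:
  assumes k: "k \<ge> 4"
    and hyp: "(k \<ge> 5 \<and> (2 ^ (k - 1) - 2) * real k * ln 2 \<le> d \<and> d \<le> 2 ^ (k - 1) * real k * ln 2)
         \<or> (k = 4 \<and> 167 / 10 \<le> d \<and> d \<le> 32 * ln 2)"
  shows "phi (1/2 - 1/2^k) \<le> (d-1) * phi ((1/2 - 1/2^k)^(k-1))"
proof -
  define s0 where "s0 = (1/2::real)^(k-1)"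
  note F = s0_facts[OF k s0_def]
  define y where "y = ((1-s0)/2)^(k-1)"
  have L1: "2/3 \<le> ln (2::real)" by (rule ln2_ge_two_thirds)
  have ys: "y = s0 * (1-s0)^(k-1)" unfolding y_def s0_def by (simp add: power_divide field_simps)
  have y0: "0 < y" unfolding y_def using F(1,2) by simp
  have "(1-s0)^(k-1) \<le> 1" using F(1,2) by (intro power_le_one) auto
  then have ys0: "y \<le> s0" unfolding ys using F(1) by (simp add: mult_left_le)
  have yh: "y < 1/2" using ys0 F(2) by simp
  have "y/(1-y) \<le> phi y" using phi_lower[OF y0 yh] .
  moreover have "y \<le> y/(1-y)" using y0 yh by (simp add: field_simps)
  ultimately have py: "y \<le> phi y" by simp
  have pa: "phi (1/2 - 1/2^k) \<le> (real k - 2) * ln 2 + s0" unfolding F(3) F(7) using F(6) .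
  show ?thesis
  proof (cases "k = 4")
    case True
    then have d: "157/10 \<le> d - 1" using hyp by simp
    have e1: "phi (1/2 - 1/2^k) = ln (9/2)" unfolding True phi_def by (simp add: eval_nat_numeral)
    have e2: "phi ((1/2 - 1/2^k)^(k-1)) = ln (3753/3410)" unfolding True phi_def by (simp add: eval_nat_numeral)
    have p: "0 < ln (3753/3410::real)" by simp
    have "ln (9/2::real) \<le> 157/10 * ln (3753/3410)" using big4 by simp
    also have "\<dots> \<le> (d-1) * ln (3753/3410)" using d p by (intro mult_right_mono) auto
    finally show ?thesis unfolding e1 e2 .
  next
    case False
    then have k5: "k \<ge> 5" and dk: "(2 ^ (k - 1) - 2) * real k * ln 2 \<le> d" using hyp k by auto
    have ph2: "phi ((1/2 - 1/2^k)^(k-1)) = phi y" unfolding F(3) y_def ..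
    show ?thesis
    proof (cases "k = 5")
      case True
      have s: "s0 = 1/16" unfolding s0_def True by (simp add: eval_nat_numeral)
      have yv: "y = 50625/1048576" unfolding y_def s True by (simp add: eval_nat_numeral)
      have d: "70 * ln 2 - 1 \<le> d - 1" using dk True by (simp add: eval_nat_numeral)
      have "70 * ln 2 - 1 \<ge> (0::real)" using L1 by simp
      then have "(70 * ln 2 - 1) * y \<le> (d-1) * phi y" using d py y0 by (intro mult_mono) auto
      moreover have "(real k - 2) * ln 2 + s0 \<le> (70 * ln 2 - 1) * y" unfolding yv s True using L1 by simp
      ultimately show ?thesis using pa ph2 by simp
    next
      case False
      then have k6: "k \<ge> 6" using k5 by simp
      define K where "K = real k"
      define Lg where "Lg = ln (2::real)"
      have K6: "K \<ge> 6" unfolding K_def using k6 by simp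
      have p2: "2^(k-1) = 1/s0" using F(4) F(1) by (simp add: field_simps)
      have pk: "(2::real)^k = 2/s0" using p2 k by (metis (no_types) F(1) Suc_diff_1 less_le_trans power_Suc times_divide_eq_right mult_1_right zero_less_numeral numeral_le_iff le_zero_eq not_less neq0_conv gr0I)
      have kb: "s0 * (K * (K+1) + 22) \<le> 2" using pow_k6[OF k6] F(1) unfolding pk K_def by (simp add: field_simps)
      have k2: "K * 2 \<le> K * (K+1)" using K6 by (intro mult_left_mono) auto
      have k12: "12 \<le> K * (K+1)" using k2 K6 by linarith
      have "s0 * 34 \<le> s0 * (K * (K+1) + 22)" using F(1) k12 by (intro mult_left_mono) auto
      then have s16: "s0 \<le> 1/16" using kb by simp
      from k2 have "(K-1) * s0 \<le> ((K * (K+1) + 22)/2) * s0" using F(1) by (intro mult_right_mono) auto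
      then have ks: "(K-1) * s0 \<le> 1" using kb by (simp add: mult.commute[of s0])
      have B0: "0 \<le> 1 - (K-1) * s0" using ks by simp
      have bern: "1 - (K-1) * s0 \<le> (1-s0)^(k-1)"
        using Bernoulli_inequality[of "-s0" "k-1"] F(1,2) k unfolding K_def by (simp add: of_nat_diff)
      have yB: "s0 * (1 - (K-1) * s0) \<le> y" unfolding ys using bern F(1) by simp
      have dd: "(1/s0 - 2) * K * Lg - 1 \<le> d - 1" using dk p2 unfolding K_def Lg_def by simp
      have A0: "0 \<le> (1/s0 - 2) * K * Lg - 1"
      proof -
        have "16 \<le> 1/s0" using F(1) s16 by (simp add: field_simps)
        then have "14 * 6 * (2/3) \<le> (1/s0 - 2) * K * Lg" using K6 L1 unfolding Lg_def
          by (intro mult_mono) auto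
        then show ?thesis by simp
      qed
      have "((1/s0 - 2) * K * Lg - 1) * (s0 * (1 - (K-1) * s0)) \<le> (d-1) * phi y"
        using dd A0 yB py B0 F(1) by (intro mult_mono) auto
      moreover have "((1/s0 - 2) * K * Lg - 1) * (s0 * (1 - (K-1) * s0))
          = K * Lg * (1 - (K+1) * s0) + 2 * (K-1) * K * Lg * s0^2 - s0 + (K-1) * s0^2"
        using F(1) by (simp add: field_simps power2_eq_square)
      moreover have "0 \<le> 2 * (K-1) * K * Lg * s0^2 + (K-1) * s0^2"
        using K6 L1 unfolding Lg_def by simp
      moreover have "K * (K+1) * Lg * s0 \<le> 2 * Lg - 22 * Lg * s0"
        using mult_right_mono[OF kb, of Lg] L1 unfolding Lg_def by (simp add: algebra_simps)
      moreover have "2 * s0 \<le> 22 * Lg * s0" using L1 F(1) unfolding Lg_def by simp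
      ultimately have "(K - 2) * Lg + s0 \<le> (d-1) * phi y" by (simp add: algebra_simps) 
      then show ?thesis using pa ph2 unfolding K_def Lg_def by simp
    qed
  qed
qed

lemma key_ineq:
  assumes k: "k \<ge> 4" and x: "1/2 - 1/2^k \<le> x" "x < 1/2"
  shows "phi x * (1/((1-x^(k-1))*(1-2*x^(k-1))) * (real (k-1) * x^(k-1-1))) < 1/((1-x)*(1-2*x)) * phi (x^(k-1))"
proof -
  define s0 where "s0 = (1/2::real)^(k-1)"
  note F = s0_facts[OF k s0_def]
  define y where "y = x^(k-1)"
  define P where "P = phi x"
  define Q where "Q = phi y"
  have L1: "2/3 \<le> ln (2::real)" by (rule ln2_ge_two_thirds)
  have xa: "(1-s0)/2 \<le> x" using x F(3) by simp
  have x0: "0 < x" using xa F(1,2) by simp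
  have y0: "0 < y" unfolding y_def using x0 by simp
  have ys: "y \<le> s0" unfolding y_def s0_def using x0 x by (intro power_mono) auto
  have yh: "y < 1/2" using ys F(2) by simp
  have P0: "0 < P" unfolding P_def using phi_pos x0 x by simp
  have Q0: "0 < Q" unfolding Q_def using phi_pos y0 yh by simp
  have Ql: "y/(1-y) \<le> Q" unfolding Q_def using phi_lower y0 yh by simp
  obtain m where m: "k - 1 = Suc m" using k by (cases "k - 1") auto
  have R: "real (k-1) * x^(k-1-1) = real (k-1) / x * y" unfolding y_def m using x0 by simp
  have Qy: "1/((1-y)*(1-2*y)) * y \<le> Q/(1-2*y)"
  proof -
    have "1/((1-y)*(1-2*y)) * y = (y/(1-y)) / (1-2*y)" by (simp add: field_simps)
    also have "\<dots> \<le> Q/(1-2*y)" using Ql yh by (intro divide_right_mono) auto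
    finally show ?thesis .
  qed
  define A where "A = (1-x)*(1-2*x)"
  define B where "B = x*(1-2*y)"
  have A0: "0 < A" unfolding A_def using x by simp
  have B0: "0 < B" unfolding B_def using x0 yh by simp
  have conv: "((1+(1-2*x))/2) * (1-2*x) * ln ((1+(1-2*x))/(2*(1-2*x)))
      \<le> ((1+s0)/2) * s0 * ln ((1+s0)/(2 * s0))"
  proof (rule conv_bound)
    show "0 < s0" "s0 < 1" using F(1,2) by auto
    show "0 < 1 - 2*x" "1 - 2*x \<le> s0" using x xa by auto
    have "0 \<le> ln (1+s0)" using F(1) by simp
    moreover have "2 * (2/3) \<le> (real k - 2) * ln 2" using k L1 by (intro mult_mono) auto
    ultimately show "1 \<le> ln ((1+s0)/(2 * s0))" unfolding F(5) by simp
  qed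
  have e1: "(1+(1-2*x))/(2*(1-2*x)) = (1-x)/(1-2*x)" using x by (simp add: field_simps)
  have e2: "(1+(1-2*x))/2 = 1-x" by simp
  have AP: "A * P = ((1+(1-2*x))/2) * (1-2*x) * ln ((1+(1-2*x))/(2*(1-2*x)))"
    unfolding A_def P_def phi_def e1 e2 by simp
  have "(real k - 1) * (A * P) \<le> (real k - 1) * (((1+s0)/2) * s0 * ln ((1+s0)/(2 * s0)))"
    unfolding AP using conv k by (intro mult_left_mono) auto
  also have "\<dots> < (1-s0)/2 * (1 - 2 * s0)" by (rule uniq_num[OF k s0_def])
  also have "\<dots> \<le> B" unfolding B_def using xa ys F(1,2) by (intro mult_mono) auto
  finally have main: "real (k-1) * (A * P) < B" using k by (simp add: of_nat_diff)
  have "P * (1/((1-y)*(1-2*y)) * (real (k-1) * x^(k-1-1)))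
      = P * real (k-1) / x * (1/((1-y)*(1-2*y)) * y)" unfolding R using x0 yh by (simp add: field_simps)
  also have "\<dots> \<le> P * real (k-1) / x * (Q/(1-2*y))"
    using Qy P0 x0 by (intro mult_left_mono) auto
  also have "\<dots> = (real (k-1) * A * P) * Q / (A * B)" unfolding B_def using A0 x0 yh by (simp add: field_simps)
  also have "\<dots> < B * Q / (A * B)" using main Q0 A0 B0 by (intro divide_strict_right_mono mult_strict_right_mono) (auto simp: mult.assoc)
  also have "\<dots> = 1/A * Q" using B0 A0 by simp
  finally show ?thesis unfolding P_def Q_def y_def A_def .
qed

lemma H_mono:
  assumes k: "k \<ge> 4" and x: "1/2 - 1/2^k \<le> x1" "x1 < x2" "x2 < 1/2"
  shows "phi x1 / phi (x1^(k-1)) < phi x2 / phi (x2^(k-1))"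
proof (rule DERIV_pos_imp_increasing[OF x(2)])
  fix x assume xx: "x1 \<le> x" "x \<le> x2"
  define s0 where "s0 = (1/2::real)^(k-1)"
  note F = s0_facts[OF k s0_def]
  have xa: "1/2 - 1/2^k \<le> x" "x < 1/2" using xx x by auto
  have x0: "0 < x" using xa F(1,2,3) by simp
  have ys: "x^(k-1) \<le> s0" unfolding s0_def using x0 xa by (intro power_mono) auto
  have y0: "0 < x^(k-1)" using x0 by simp
  have yh: "x^(k-1) < 1/2" using ys F(2) by simp
  have d1: "((\<lambda>x. phi (x^(k-1))) has_real_derivative
      (1/((1-x^(k-1))*(1-2*x^(k-1)))) * (real (k-1) * x^(k-1-1))) (at x)"
  proof -
    have dp: "((\<lambda>x. x^(k-1)) has_real_derivative real (k-1) * x^(k-1-1)) (at x)"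
      using DERIV_pow[of "k-1" x UNIV] by simp
    show ?thesis using DERIV_chain'[OF dp phi_deriv[OF yh]] by simp
  qed
  have Q0: "phi (x^(k-1)) \<noteq> 0" using phi_pos[OF y0 yh] by simp
  have D: "((\<lambda>x. phi x / phi (x^(k-1))) has_real_derivative
      (1/((1-x)*(1-2*x)) * phi (x^(k-1)) - phi x * ((1/((1-x^(k-1))*(1-2*x^(k-1)))) * (real (k-1) * x^(k-1-1))))
        / (phi (x^(k-1)) * phi (x^(k-1)))) (at x)"
    by (rule DERIV_divide[OF phi_deriv d1 Q0]) (use xa in simp)
  have "0 < (1/((1-x)*(1-2*x)) * phi (x^(k-1)) - phi x * ((1/((1-x^(k-1))*(1-2*x^(k-1)))) * (real (k-1) * x^(k-1-1))))
        / (phi (x^(k-1)) * phi (x^(k-1)))"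
    using key_ineq[OF k xa] phi_pos[OF y0 yh] by (intro divide_pos_pos) auto
  with D show "\<exists>y. ((\<lambda>x. phi x / phi (x^(k-1))) has_real_derivative y) (at x) \<and> 0 < y" by blast
qed

lemma ypow:
  assumes "k \<ge> 4" "0 < x" "x \<le> (1/2::real)"
  shows "0 < x^(k-1)" "x^(k-1) \<le> 1/4"
proof -
  show "0 < x^(k-1)" using assms by simp
  have "x^(k-1) \<le> (1/2)^(k-1)" using assms by (intro power_mono) auto
  also have "\<dots> \<le> (1/2)^2" using assms by (intro power_decreasing) auto
  finally show "x^(k-1) \<le> 1/4" by (simp add: eval_nat_numeral)
qed

lemma a_pos: "k \<ge> 4 \<Longrightarrow> 0 < 1/2 - 1/(2::real)^k"
proof -
  assume "k \<ge> 4"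
  then have "(2::real)^4 \<le> 2^k" by (intro power_increasing) auto
  then show ?thesis by (simp add: field_simps)
qed

lemma Psi_cont:
  assumes k: "k \<ge> 4" and d: "d > 1"
  shows "continuous_on {1/2 - 1/2^k..1/2} (\<lambda>x. Psi k d x - x)"
proof -
  have a0: "0 < 1/2 - 1/(2::real)^k" using a_pos[OF k] .
  have yb: "0 < x^(k-1) \<and> x^(k-1) \<le> 1/4" if "x \<in> {1/2 - 1/2^k..1/2}" for x :: real
  proof -
    have "1/2 - 1/2^k \<le> x" using that by simp
    then have x0: "0 < x" using a0 by linarith
    show ?thesis using ypow[OF k x0] that by simp
  qed
  have v: "0 < (1 - 2 * x^(k-1)) / (1 - x^(k-1)) \<and> (1 - 2 * x^(k-1)) / (1 - x^(k-1)) < 1"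
    if "x \<in> {1/2 - 1/2^k..1/2}" for x :: real
    using yb[OF that] by (auto simp: field_simps)
  have w: "((1 - 2 * x^(k-1)) / (1 - x^(k-1))) powr (d-1) < 1"
    if "x \<in> {1/2 - 1/2^k..1/2}" for x :: real
    using powr_less_mono2[of "d-1" "(1 - 2 * x^(k-1)) / (1 - x^(k-1))" 1] v[OF that] d by simp
  show ?thesis
    unfolding Psi_def psi_dot_def psi_hat_def comp_def
    apply (intro continuous_intros)
    using yb v w by fastforce+
qed

theorem lemma3p1:
  fixes k :: nat and d :: real
  assumes "k \<ge> 4"
    and "(k \<ge> 5 \<and> (2 ^ (k - 1) - 2) * real k * ln 2 \<le> d \<and> d \<le> 2 ^ (k - 1) * real k * ln 2)
         \<or> (k = 4 \<and> 167 / 10 \<le> d \<and> d \<le> 32 * ln 2)"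
  shows "\<exists>!x. x \<in> {1/2 - 1/2^k .. 1/2} \<and> Psi k d x = x"
proof -
  note k = assms(1) and hyp = assms(2)
  define a where "a = 1/2 - 1/(2::real)^k"
  have a0: "0 < a" unfolding a_def using a_pos[OF k] .
  have ah: "a < 1/2" unfolding a_def by simp
  have L1: "2/3 \<le> ln (2::real)" by (rule ln2_ge_two_thirds)
  have d1: "d > 1"
  proof (cases "k = 4")
    case True then show ?thesis using hyp by simp
  next
    case False
    then have k5: "k \<ge> 5" and dk: "(2 ^ (k - 1) - 2) * real k * ln 2 \<le> d" using hyp k by auto
    have "(2::real)^4 \<le> 2^(k-1)" using k5 by (intro power_increasing) auto
    then have "14 * 5 * (2/3) \<le> (2 ^ (k - 1) - 2) * real k * ln 2" using k5 L1
      by (intro mult_mono) auto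
    then show ?thesis using dk by simp
  qed
  have char: "x < 1/2 \<and> (d-1) * phi (x^(k-1)) = phi x"
    if x: "x \<in> {a..1/2}" "Psi k d x = x" for x
  proof -
    have "x \<noteq> 1/2"
    proof
      assume "x = 1/2"
      then show False using Psi_half[OF k d1] x(2) by (metis less_irrefl)
    qed
    then have xh: "x < 1/2" using x(1) by simp
    have x0: "0 < x" using x(1) a0 by simp
    have yb: "0 < x^(k-1)" "x^(k-1) \<le> 1/4" using ypow[OF k x0] xh by auto
    then have "x^(k-1) < 1/2" by simp
    with Psi_iff[OF x0 xh d1 yb(1)] x(2) xh show ?thesis by simp
  qed
  show ?thesis
  proof (rule ex_ex1I)
    have fa: "0 \<le> Psi k d a - a"
    proof -
      have yb: "0 < a^(k-1)" "a^(k-1) \<le> 1/4" using ypow[OF k a0] ah by auto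
      then have "a^(k-1) < 1/2" by simp
      with Psi_iff[OF a0 ah d1 yb(1)] exist_num[OF k hyp] show ?thesis unfolding a_def by simp
    qed
    have fb: "Psi k d (1/2) - 1/2 \<le> 0" using Psi_half[OF k d1] by simp
    obtain x where "a \<le> x" "x \<le> 1/2" "Psi k d x - x = 0"
      using IVT2'[of "\<lambda>x. Psi k d x - x" "1/2" 0 a] fb fa ah Psi_cont[OF k d1] unfolding a_def
      by auto
    then show "\<exists>x. x \<in> {1/2 - 1/2^k .. 1/2} \<and> Psi k d x = x" unfolding a_def by auto
  next
    fix x1 x2
    assume h1: "x1 \<in> {1/2 - 1/2^k .. 1/2} \<and> Psi k d x1 = x1"
       and h2: "x2 \<in> {1/2 - 1/2^k .. 1/2} \<and> Psi k d x2 = x2"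
    have c1: "x1 < 1/2 \<and> (d-1) * phi (x1^(k-1)) = phi x1" using char h1 unfolding a_def by auto
    have c2: "x2 < 1/2 \<and> (d-1) * phi (x2^(k-1)) = phi x2" using char h2 unfolding a_def by auto
    have q: "phi x / phi (x^(k-1)) = d - 1" if "x \<in> {a..1/2}" "x < 1/2" "(d-1) * phi (x^(k-1)) = phi x" for x
    proof -
      have x0: "0 < x" using that a0 by simp
      have "0 < x^(k-1)" "x^(k-1) \<le> 1/4" using ypow[OF k x0] that by auto
      then have "0 < phi (x^(k-1))" using phi_pos by simp
      then show ?thesis using that(3) by (simp add: field_simps)
    qed
    have q1: "phi x1 / phi (x1^(k-1)) = d - 1" using q h1 c1 unfolding a_def by auto
    have q2: "phi x2 / phi (x2^(k-1)) = d - 1" using q h2 c2 unfolding a_def by auto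
    show "x1 = x2"
    proof (rule ccontr)
      assume "x1 \<noteq> x2"
      then consider "x1 < x2" | "x2 < x1" by linarith
      then show False
      proof cases
        case 1
        then have "phi x1 / phi (x1^(k-1)) < phi x2 / phi (x2^(k-1))"
          using H_mono[OF k _ 1] h1 c2 by auto
        then show False using q1 q2 by simp
      next
        case 2
        then have "phi x2 / phi (x2^(k-1)) < phi x1 / phi (x1^(k-1))"
          using H_mono[OF k _ 2] h2 c1 by auto
        then show False using q1 q2 by simp
      qed
    qed
  qed
qed

end
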